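(* Assume that for all $0\le i,j\le d$: $E^*_iAE^*_j=0$ if $|i-j|>1$, and $E^*_iAE^*_j\ne0$ if $|i-j|=1$. Then there exists a unique antiautomorphism $\dagger$ of $\mathcal A$ such that $A^\dagger=A$ and $A^{*\dagger}=A^*$. Moreover $X^{\dagger\dagger}=X$ for all $X\in\mathcal A$.
   Context: Let $\mathbb K$ be a field, $d\ge 0$ an integer, and $\mathcal A$ a $\mathbb K$-algebra isomorphic to $\mathrm{Mat}_{d+1}(\mathbb K)$, with identity $I$. An element of $\mathcal A$ is multiplicity-free if it has $d+1$ mutually distinct eigenvalues, all in $\mathbb K$; for such $A$ with eigenvalues $\theta_0,\ldots,\theta_d$, the primitive idempotent associated with $\theta_i$ is $E_i=\prod_{j\ne i}(A-\theta_jI)/(\theta_i-\theta_j)$. Standing setup: $A,A^*$ are multiplicity-free elements of $\mathcal A$ ($A^*$ is just a name, not an adjoint); $E^*_0,\ldots,E^*_d$ is an ordering of the primitive idempotents of $A^*$. An antiautomorphism of $\mathcal A$ is a $\mathbb K$-linear bijection $\sigma:\mathcal A\to\mathcal A$ with $(XY)^\sigma=Y^\sigma X^\sigma$ for all $X,Y\in\mathcal A$. *)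

theory Defs
  imports "Jordan_Normal_Form.Char_Poly"
begin

text \<open>The algebra is realised concretely as the full matrix algebra of
  (d+1) x (d+1) matrices over the field 'a, i.e. carrier_mat (Suc d) (Suc d).\<close>

definition mult_free :: "nat \<Rightarrow> 'a :: field mat \<Rightarrow> bool" where
  "mult_free d A \<longleftrightarrow> A \<in> carrier_mat (Suc d) (Suc d) \<and>
     card {k. eigenvalue A k} = Suc d"

definition prim_idem :: "nat \<Rightarrow> 'a :: field mat \<Rightarrow> (nat \<Rightarrow> 'a) \<Rightarrow> nat \<Rightarrow> 'a mat" where
  "prim_idem d A th i =
     foldr (\<lambda>j M. ((1 / (th i - th j)) \<cdot>\<^sub>m (A - th j \<cdot>\<^sub>m 1\<^sub>m (Suc d))) * M)
       (filter (\<lambda>j. j \<noteq> i) [0..<Suc d]) (1\<^sub>m (Suc d))"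

definition eig_ordering :: "nat \<Rightarrow> 'a :: field mat \<Rightarrow> (nat \<Rightarrow> 'a) \<Rightarrow> bool" where
  "eig_ordering d A th \<longleftrightarrow> inj_on th {0..d} \<and> th ` {0..d} = {k. eigenvalue A k}"

definition antiautomorphism :: "nat \<Rightarrow> ('a :: field mat \<Rightarrow> 'a mat) \<Rightarrow> bool" where
  "antiautomorphism n \<sigma> \<longleftrightarrow>
     bij_betw \<sigma> (carrier_mat n n) (carrier_mat n n) \<and>
     (\<forall>X\<in>carrier_mat n n. \<forall>Y\<in>carrier_mat n n. \<sigma> (X + Y) = \<sigma> X + \<sigma> Y) \<and>
     (\<forall>c. \<forall>X\<in>carrier_mat n n. \<sigma> (c \<cdot>\<^sub>m X) = c \<cdot>\<^sub>m \<sigma> X) \<and>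
     (\<forall>X\<in>carrier_mat n n. \<forall>Y\<in>carrier_mat n n. \<sigma> (X * Y) = \<sigma> Y * \<sigma> X)"

end

theory Submission
  imports Defs
begin

definition umat :: "nat \<Rightarrow> nat \<Rightarrow> nat \<Rightarrow> 'a::field mat" where
  "umat n i j = mat n n (\<lambda>(a,b). if a = i \<and> b = j then 1 else 0)"

lemma umat_carrier[simp]: "umat n i j \<in> carrier_mat n n"
  and umat_dim[simp]: "dim_row (umat n i j) = n" "dim_col (umat n i j) = n"
  unfolding umat_def by auto

lemma umat_index[simp]: "a < n \<Longrightarrow> b < n \<Longrightarrow> umat n i j $$ (a,b) = (if a = i \<and> b = j then 1 else 0)"
  unfolding umat_def by auto

lemma mult_umat_right:
  assumes X: "X \<in> carrier_mat n n" and i: "i < n" and j: "j < n"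
  shows "X * umat n i j = mat n n (\<lambda>(a,b). if b = j then X $$ (a,i) else 0)"
proof (rule eq_matI)
  fix a b assume a: "a < dim_row (mat n n (\<lambda>(a,b). if b = j then X $$ (a,i) else 0 :: 'a))"
    and b: "b < dim_col (mat n n (\<lambda>(a,b). if b = j then X $$ (a,i) else 0 :: 'a))"
  have "(X * umat n i j) $$ (a,b) = (\<Sum>k<n. X $$ (a,k) * (if k = i \<and> b = j then 1 else 0))"
    using X a b by (simp add: umat_def scalar_prod_def lessThan_atLeast0)
  also have "\<dots> = (\<Sum>k<n. if k = i then (if b = j then X $$ (a,k) else 0) else 0)"
    by (rule sum.cong) auto
  also have "\<dots> = (if b = j then X $$ (a,i) else 0)"
    using i by simp
  finally show "(X * umat n i j) $$ (a,b) = mat n n (\<lambda>(a,b). if b = j then X $$ (a,i) else 0) $$ (a,b)"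
    using a b by simp
qed (use X in auto)

lemma mult_umat_left:
  assumes X: "X \<in> carrier_mat n n" and i: "i < n" and j: "j < n"
  shows "umat n i j * X = mat n n (\<lambda>(a,b). if a = i then X $$ (j,b) else 0)"
proof (rule eq_matI)
  fix a b assume a: "a < dim_row (mat n n (\<lambda>(a,b). if a = i then X $$ (j,b) else 0 :: 'a))"
    and b: "b < dim_col (mat n n (\<lambda>(a,b). if a = i then X $$ (j,b) else 0 :: 'a))"
  have "(umat n i j * X) $$ (a,b) = (\<Sum>k<n. (if a = i \<and> k = j then 1 else 0) * X $$ (k,b))"
    using X a b by (simp add: umat_def scalar_prod_def lessThan_atLeast0)
  also have "\<dots> = (\<Sum>k<n. if k = j then (if a = i then X $$ (k,b) else 0) else 0)"
    by (rule sum.cong) auto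
  also have "\<dots> = (if a = i then X $$ (j,b) else 0)"
    using j by simp
  finally show "(umat n i j * X) $$ (a,b) = mat n n (\<lambda>(a,b). if a = i then X $$ (j,b) else 0) $$ (a,b)"
    using a b by simp
qed (use X in auto)

lemma umat_mid:
  assumes X: "X \<in> carrier_mat n n" and i: "i < n" and j: "j < n"
  shows "umat n i i * X * umat n j j = X $$ (i,j) \<cdot>\<^sub>m umat n i j"
proof -
  define M where "M = mat n n (\<lambda>(a,b). if a = i then X $$ (i,b) else 0)"
  have M: "M \<in> carrier_mat n n" unfolding M_def by auto
  have "umat n i i * X * umat n j j = M * umat n j j"
    unfolding M_def mult_umat_left[OF X i i] ..
  also have "\<dots> = X $$ (i,j) \<cdot>\<^sub>m umat n i j"
    unfolding mult_umat_right[OF M j j] using assms by (intro eq_matI) (auto simp: M_def)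
  finally show ?thesis .
qed

lemma umat_umat:
  assumes "i < n" "j < n" "k < n" "l < n"
  shows "umat n i j * umat n k l = (if j = k then umat n i l else 0\<^sub>m n n)"
  using assms by (subst mult_umat_right) (auto intro!: eq_matI)

lemma inv_cancel_assoc:
  fixes A :: "'a::field mat"
  assumes "A \<in> carrier_mat n n" "B \<in> carrier_mat n n" "X \<in> carrier_mat n k" "A * B = 1\<^sub>m n"
  shows "A * (B * X) = X"
proof -
  have "A * (B * X) = (A * B) * X" using assoc_mult_mat[OF assms(1,2,3)] by simp
  then show ?thesis using assms(4) left_mult_one_mat[OF assms(3)] by simp
qed

lemma conj_cancel:
  fixes M :: "'a::field mat"
  assumes "M \<in> carrier_mat n n" "Mi \<in> carrier_mat n n" "Y \<in> carrier_mat n n"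
    "Mi * M = 1\<^sub>m n" "M * Mi = 1\<^sub>m n"
  shows "Mi * (M * Y * Mi) * M = Y"
proof -
  have "Mi * (M * Y * Mi) * M = Mi * (M * (Y * (Mi * M)))"
    using assms by (simp add: assoc_mult_mat[of _ n n _ n _ n] mult_carrier_mat[of _ n n _ n])
  also have "\<dots> = Y" using assms right_mult_one_mat[OF assms(3)]
    by (simp add: inv_cancel_assoc[of _ n _ _ n] mult_carrier_mat[of _ n n _ n])
  finally show ?thesis .
qed

lemma anti_carrier: "antiautomorphism n \<tau> \<Longrightarrow> X \<in> carrier_mat n n \<Longrightarrow> \<tau> X \<in> carrier_mat n n"
  unfolding antiautomorphism_def using bij_betw_apply[of \<tau> "carrier_mat n n" "carrier_mat n n" X] by simp

lemma anti_one: assumes "antiautomorphism n \<tau>" shows "\<tau> (1\<^sub>m n) = 1\<^sub>m n"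
proof -
  have bij: "bij_betw \<tau> (carrier_mat n n) (carrier_mat n n)" and
    mul: "\<forall>X\<in>carrier_mat n n. \<forall>Y\<in>carrier_mat n n. \<tau> (X * Y) = \<tau> Y * \<tau> X"
    using assms unfolding antiautomorphism_def by simp_all
  have "\<tau> ` carrier_mat n n = carrier_mat n n" using bij unfolding bij_betw_def by simp
  then have "1\<^sub>m n \<in> \<tau> ` carrier_mat n n" by simp
  then obtain X where X1: "1\<^sub>m n = \<tau> X" and X0: "X \<in> carrier_mat n n" by (rule imageE)
  have X: "X \<in> carrier_mat n n" "\<tau> X = 1\<^sub>m n" using X0 X1 by simp_all
  have e1: "\<tau> (X * 1\<^sub>m n) = \<tau> (1\<^sub>m n) * \<tau> X" using mul X(1) one_carrier_mat by blast
  have e2: "X * 1\<^sub>m n = X" by (rule right_mult_one_mat[OF X(1)])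
  have e3: "\<tau> (1\<^sub>m n) * 1\<^sub>m n = \<tau> (1\<^sub>m n)" by (rule right_mult_one_mat[OF anti_carrier[OF assms one_carrier_mat]])
  from e1 show ?thesis unfolding e2 X(2) e3 by simp
qed

lemma anti_conj:
  assumes M: "M \<in> carrier_mat n n" and Mi: "Mi \<in> carrier_mat n n"
    and MMi: "M * Mi = 1\<^sub>m n" and MiM: "Mi * M = 1\<^sub>m n"
  shows "antiautomorphism n (\<lambda>X. M * transpose_mat X * Mi)"
  unfolding antiautomorphism_def
proof (intro conjI ballI allI)
  show "bij_betw (\<lambda>X. M * transpose_mat X * Mi) (carrier_mat n n) (carrier_mat n n)"
  proof (rule bij_betw_byWitness[where f' = "\<lambda>X. transpose_mat (Mi * X * M)"])
    show "\<forall>a\<in>carrier_mat n n. transpose_mat (Mi * (M * transpose_mat a * Mi) * M) = a"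
    proof
      fix a :: "'a mat" assume a: "a \<in> carrier_mat n n"
      have "Mi * (M * transpose_mat a * Mi) * M = transpose_mat a"
        by (rule conj_cancel[OF M Mi _ MiM MMi]) (use a in simp)
      then show "transpose_mat (Mi * (M * transpose_mat a * Mi) * M) = a" by simp
    qed
    show "\<forall>a\<in>carrier_mat n n. M * transpose_mat (transpose_mat (Mi * a * M)) * Mi = a"
      using conj_cancel[OF Mi M _ MMi MiM] by simp
    show "(\<lambda>X. M * transpose_mat X * Mi) ` carrier_mat n n \<subseteq> carrier_mat n n"
      using M Mi by auto
    show "(\<lambda>X. transpose_mat (Mi * X * M)) ` carrier_mat n n \<subseteq> carrier_mat n n"
      using M Mi by auto
  qed
next
  fix X Y :: "'a mat" assume X: "X \<in> carrier_mat n n" and Y: "Y \<in> carrier_mat n n"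
  show "M * transpose_mat (X + Y) * Mi = M * transpose_mat X * Mi + M * transpose_mat Y * Mi"
  proof -
    have "M * transpose_mat (X + Y) * Mi = (M * transpose_mat X + M * transpose_mat Y) * Mi"
      using M X Y by (simp add: transpose_add mult_add_distrib_mat[of M n n])
    also have "\<dots> = M * transpose_mat X * Mi + M * transpose_mat Y * Mi"
      using M Mi X Y by (intro add_mult_distrib_mat[of _ n n]) auto
    finally show ?thesis .
  qed
  show "M * transpose_mat (X * Y) * Mi = M * transpose_mat Y * Mi * (M * transpose_mat X * Mi)"
    using M Mi X Y by (simp add: transpose_mult inv_cancel_assoc[of _ n _ _ n] MiM assoc_mult_mat[of _ n n _ n _ n] mult_carrier_mat[of _ n n _ n])
next
  fix c and X :: "'a mat" assume X: "X \<in> carrier_mat n n"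
  have "transpose_mat (c \<cdot>\<^sub>m X) = c \<cdot>\<^sub>m transpose_mat X" by (intro eq_matI) auto
  then show "M * transpose_mat (c \<cdot>\<^sub>m X) * Mi = c \<cdot>\<^sub>m (M * transpose_mat X * Mi)"
    using M Mi X by (simp add: mult_smult_distrib[of M n n] mult_smult_assoc_mat[of _ n n Mi n])
qed

lemma smult_mat_vec: 
  fixes X :: "'a::field mat"
  assumes "X \<in> carrier_mat n n" "v \<in> carrier_vec n"
  shows "(c \<cdot>\<^sub>m X) *\<^sub>v v = c \<cdot>\<^sub>v (X *\<^sub>v v)"
  using assms by (intro eq_vecI) (auto simp: scalar_prod_def sum_distrib_left mult.assoc)

lemma factor_vec:
  fixes As :: "'a::field mat"
  assumes As: "As \<in> carrier_mat n n" and v: "v \<in> carrier_vec n" and ev: "As *\<^sub>v v = \<mu> \<cdot>\<^sub>v v"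
  shows "(c \<cdot>\<^sub>m (As - t \<cdot>\<^sub>m 1\<^sub>m n)) *\<^sub>v v = (c * (\<mu> - t)) \<cdot>\<^sub>v v"
proof -
  have "(c \<cdot>\<^sub>m (As - t \<cdot>\<^sub>m 1\<^sub>m n)) *\<^sub>v v = c \<cdot>\<^sub>v ((As - t \<cdot>\<^sub>m 1\<^sub>m n) *\<^sub>v v)"
    using As v by (intro smult_mat_vec) auto
  also have "(As - t \<cdot>\<^sub>m 1\<^sub>m n) *\<^sub>v v = As *\<^sub>v v - (t \<cdot>\<^sub>m 1\<^sub>m n) *\<^sub>v v"
    using As v by (intro minus_mult_distrib_mat_vec) auto
  also have "(t \<cdot>\<^sub>m 1\<^sub>m n) *\<^sub>v v = t \<cdot>\<^sub>v v"
    using v smult_mat_vec[of "1\<^sub>m n" n v t] by simp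
  finally show ?thesis unfolding ev using v by (intro eq_vecI) (auto simp: right_diff_distrib left_diff_distrib mult.assoc)
qed

lemma foldr_carrier:
  fixes As :: "'a::field mat"
  assumes As: "As \<in> carrier_mat n n"
  shows "foldr (\<lambda>j M. (c j \<cdot>\<^sub>m (As - t j \<cdot>\<^sub>m 1\<^sub>m n)) * M) js (1\<^sub>m n) \<in> carrier_mat n n"
  using As by (induction js) auto

lemma foldr_vec:
  fixes As :: "'a::field mat"
  assumes As: "As \<in> carrier_mat n n" and v: "v \<in> carrier_vec n" and ev: "As *\<^sub>v v = \<mu> \<cdot>\<^sub>v v"
  shows "foldr (\<lambda>j M. (c j \<cdot>\<^sub>m (As - t j \<cdot>\<^sub>m 1\<^sub>m n)) * M) js (1\<^sub>m n) *\<^sub>v v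
     = prod_list (map (\<lambda>j. c j * (\<mu> - t j)) js) \<cdot>\<^sub>v v"
proof (induction js)
  case Nil
  then show ?case using v by (auto intro!: eq_vecI)
next
  case (Cons j js)
  let ?R = "foldr (\<lambda>j M. (c j \<cdot>\<^sub>m (As - t j \<cdot>\<^sub>m 1\<^sub>m n)) * M) js (1\<^sub>m n)"
  let ?F = "c j \<cdot>\<^sub>m (As - t j \<cdot>\<^sub>m 1\<^sub>m n)"
  have R: "?R \<in> carrier_mat n n" by (rule foldr_carrier[OF As])
  have F: "?F \<in> carrier_mat n n" using As by auto
  have "(?F * ?R) *\<^sub>v v = ?F *\<^sub>v (?R *\<^sub>v v)" using F R v by simp
  also have "\<dots> = ?F *\<^sub>v (prod_list (map (\<lambda>j. c j * (\<mu> - t j)) js) \<cdot>\<^sub>v v)" using Cons by simp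
  also have "\<dots> = prod_list (map (\<lambda>j. c j * (\<mu> - t j)) js) \<cdot>\<^sub>v (?F *\<^sub>v v)"
    by (rule mult_mat_vec[OF F v])
  also have "?F *\<^sub>v v = (c j * (\<mu> - t j)) \<cdot>\<^sub>v v" by (rule factor_vec[OF As v ev])
  finally have "(?F * ?R) *\<^sub>v v = prod_list (map (\<lambda>j. c j * (\<mu> - t j)) js) \<cdot>\<^sub>v ((c j * (\<mu> - t j)) \<cdot>\<^sub>v v)" .
  also have "\<dots> = (c j * (\<mu> - t j) * prod_list (map (\<lambda>j. c j * (\<mu> - t j)) js)) \<cdot>\<^sub>v v"
    by (simp add: smult_smult_assoc mult.commute)
  finally show ?case by simp
qed

lemma foldr_P:
  fixes As :: "'a::field mat"
  assumes As: "As \<in> carrier_mat n n"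
    and Padd: "\<And>X Y. X \<in> carrier_mat n n \<Longrightarrow> Y \<in> carrier_mat n n \<Longrightarrow> P X \<Longrightarrow> P Y \<Longrightarrow> P (X + Y)"
    and Pmul: "\<And>X Y. X \<in> carrier_mat n n \<Longrightarrow> Y \<in> carrier_mat n n \<Longrightarrow> P X \<Longrightarrow> P Y \<Longrightarrow> P (X * Y)"
    and Psm: "\<And>c X. X \<in> carrier_mat n n \<Longrightarrow> P X \<Longrightarrow> P (c \<cdot>\<^sub>m X)"
    and P1: "P (1\<^sub>m n)" and PAs: "P As"
  shows "P (foldr (\<lambda>j M. (c j \<cdot>\<^sub>m (As - t j \<cdot>\<^sub>m 1\<^sub>m n)) * M) js (1\<^sub>m n))"
proof (induction js)
  case Nil
  then show ?case using P1 by simp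
next
  case (Cons j js)
  have e: "As - t j \<cdot>\<^sub>m 1\<^sub>m n = As + (- t j) \<cdot>\<^sub>m 1\<^sub>m n" using As by (intro eq_matI) auto
  have "P (As - t j \<cdot>\<^sub>m 1\<^sub>m n)" unfolding e using As P1 PAs by (intro Padd Psm) auto
  then have "P (c j \<cdot>\<^sub>m (As - t j \<cdot>\<^sub>m 1\<^sub>m n))" using As by (intro Psm) auto
  then have "P (c j \<cdot>\<^sub>m (As - t j \<cdot>\<^sub>m 1\<^sub>m n) * foldr (\<lambda>j M. (c j \<cdot>\<^sub>m (As - t j \<cdot>\<^sub>m 1\<^sub>m n)) * M) js (1\<^sub>m n))"
    using Cons foldr_carrier[OF As] As by (intro Pmul) auto
  then show ?case by simp
qed

lemma smult_cancel_mat: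
  fixes X :: "'a::field mat"
  assumes "c \<noteq> 0"
  shows "(1 / c) \<cdot>\<^sub>m (c \<cdot>\<^sub>m X) = X"
  using assms by (intro eq_matI) auto

lemma idx_lt: "a < (n::nat) \<Longrightarrow> b < n \<Longrightarrow> a * n + b < n * n"
proof -
  assume a: "a < n" and b: "b < n"
  have "a * n + b < a * n + n" using b by simp
  also have "\<dots> = Suc a * n" by simp
  also have "\<dots> \<le> n * n" using a by (intro mult_le_mono1) simp
  finally show ?thesis .
qed

lemma gen_conj:
  fixes T :: "'a::field mat"
  assumes Qadd: "\<And>X Y. X \<in> carrier_mat n n \<Longrightarrow> Y \<in> carrier_mat n n \<Longrightarrow> Q X \<Longrightarrow> Q Y \<Longrightarrow> Q (X + Y)"
    and Qmul: "\<And>X Y. X \<in> carrier_mat n n \<Longrightarrow> Y \<in> carrier_mat n n \<Longrightarrow> Q X \<Longrightarrow> Q Y \<Longrightarrow> Q (X * Y)"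
    and Qsm: "\<And>c X. X \<in> carrier_mat n n \<Longrightarrow> Q X \<Longrightarrow> Q (c \<cdot>\<^sub>m X)"
    and QU: "\<And>i. i < n \<Longrightarrow> Q (umat n i i)"
    and T: "T \<in> carrier_mat n n" and QT: "Q T"
    and nz1: "\<And>i. Suc i < n \<Longrightarrow> T $$ (i, Suc i) \<noteq> 0"
    and nz2: "\<And>i. Suc i < n \<Longrightarrow> T $$ (Suc i, i) \<noteq> 0"
    and Y: "Y \<in> carrier_mat n n"
  shows "Q Y"
proof -
  have mid: "Q (T $$ (i, j) \<cdot>\<^sub>m umat n i j)" if "i < n" "j < n" for i j
  proof -
    have "Q (umat n i i * T * umat n j j)" using that T QT QU
      by (intro Qmul) (auto intro: Qmul)
    then show ?thesis using umat_mid[OF T that] by simp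
  qed
  have up: "Q (umat n i (Suc i))" if "Suc i < n" for i
  proof -
    have "Q (T $$ (i, Suc i) \<cdot>\<^sub>m umat n i (Suc i))" using mid[of i "Suc i"] that by simp
    then have "Q ((1 / T $$ (i, Suc i)) \<cdot>\<^sub>m (T $$ (i, Suc i) \<cdot>\<^sub>m umat n i (Suc i)))"
      by (intro Qsm[of "T $$ (i, Suc i) \<cdot>\<^sub>m umat n i (Suc i)"]) auto
    then show ?thesis using smult_cancel_mat[OF nz1[OF that]] by simp
  qed
  have down: "Q (umat n (Suc i) i)" if "Suc i < n" for i
  proof -
    have "Q (T $$ (Suc i, i) \<cdot>\<^sub>m umat n (Suc i) i)" using mid[of "Suc i" i] that by simp
    then have "Q ((1 / T $$ (Suc i, i)) \<cdot>\<^sub>m (T $$ (Suc i, i) \<cdot>\<^sub>m umat n (Suc i) i))"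
      by (intro Qsm[of "T $$ (Suc i, i) \<cdot>\<^sub>m umat n (Suc i) i"]) auto
    then show ?thesis using smult_cancel_mat[OF nz2[OF that]] by simp
  qed
  have up2: "Q (umat n i (i + k))" if "i + k < n" for i k
    using that
  proof (induction k)
    case 0
    then show ?case using QU by simp
  next
    case (Suc k)
    have e: "umat n i (i + k) * umat n (i + k) (Suc (i + k)) = umat n i (i + Suc k)"
      using Suc.prems by (subst umat_umat) auto
    have q: "Q (umat n i (i + k) * umat n (i + k) (Suc (i + k)))"
      using Suc up[of "i + k"] by (intro Qmul) auto
    show ?case using q[unfolded e] .
  qed
  have down2: "Q (umat n (j + k) j)" if "j + k < n" for j k
    using that
  proof (induction k)
    case 0
    then show ?case using QU by simp
  next
    case (Suc k)
    have e: "umat n (Suc (j + k)) (j + k) * umat n (j + k) j = umat n (j + Suc k) j"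
      using Suc.prems by (subst umat_umat) auto
    have q: "Q (umat n (Suc (j + k)) (j + k) * umat n (j + k) j)"
      using Suc down[of "j + k"] by (intro Qmul) auto
    show ?case using q[unfolded e] .
  qed
  have allU: "Q (umat n i j)" if "i < n" "j < n" for i j
  proof (cases "i \<le> j")
    case True
    then obtain k where "j = i + k" using le_Suc_ex by blast
    then show ?thesis using up2[of i k] that by simp
  next
    case False
    then obtain k where "i = j + k" using le_Suc_ex[of j i] by force
    then show ?thesis using down2[of j k] that by simp
  qed
  define Yk where "Yk k = mat n n (\<lambda>(a,b). if a * n + b < k then Y $$ (a,b) else 0)" for k
  have Ykc: "Yk k \<in> carrier_mat n n" for k unfolding Yk_def by simp
  have QYk: "Q (Yk k)" for k
  proof (induction k)
    case 0
    have "Yk 0 = 0 \<cdot>\<^sub>m T" unfolding Yk_def using T by (intro eq_matI) auto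
    then show ?case using Qsm[OF T QT] by simp
  next
    case (Suc k)
    define R where "R = (if k < n * n then Y $$ (k div n, k mod n) \<cdot>\<^sub>m umat n (k div n) (k mod n) else 0 \<cdot>\<^sub>m T)"
    have Rc: "R \<in> carrier_mat n n" unfolding R_def using T by auto
    have QR: "Q R"
    proof (cases "k < n * n")
      case True
      then have "k div n < n" "k mod n < n"
        by (simp_all add: less_mult_imp_div_less) (metis mod_less_divisor mult_eq_0_iff not_gr0 not_less_zero)
      then show ?thesis unfolding R_def using True allU by (simp add: Qsm)
    next
      case False
      then show ?thesis unfolding R_def using Qsm[OF T QT] by simp
    qed
    have "Yk (Suc k) = Yk k + R"
    proof (rule eq_matI)
      fix a b assume a: "a < dim_row (Yk k + R)" and b: "b < dim_col (Yk k + R)"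
      then have a': "a < n" and b': "b < n" using Ykc Rc by auto
      have dm: "(a * n + b) div n = a" "(a * n + b) mod n = b" using b' by auto
      have "R $$ (a,b) = (if a * n + b = k then Y $$ (a,b) else 0)"
      proof (cases "a * n + b = k")
        case True
        then show ?thesis unfolding R_def using dm a' b' idx_lt[OF a' b'] by auto
      next
        case False
        have "\<not> (a = k div n \<and> b = k mod n)"
        proof
          assume "a = k div n \<and> b = k mod n"
          then have "a * n + b = k" by simp
          with False show False by simp
        qed
        then show ?thesis unfolding R_def using False a' b' T by auto
      qed
      then show "Yk (Suc k) $$ (a,b) = (Yk k + R) $$ (a,b)"
        unfolding Yk_def using a' b' Rc by auto
    qed (use Ykc Rc in auto)
    then show ?case using Suc Qadd[OF Ykc Rc] QR by simp
  qed
  have "Yk (n * n) = Y" unfolding Yk_def using Y idx_lt by (intro eq_matI) auto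
  then show ?thesis using QYk by metis
qed

definition dmat :: "nat \<Rightarrow> (nat \<Rightarrow> 'a::field) \<Rightarrow> 'a mat" where
  "dmat n f = mat n n (\<lambda>(a,b). if a = b then f a else 0)"

lemma dmat_carrier[simp]: "dmat n f \<in> carrier_mat n n"
  and dmat_dim[simp]: "dim_row (dmat n f) = n" "dim_col (dmat n f) = n"
  unfolding dmat_def by auto

lemma dmat_index[simp]: "a < n \<Longrightarrow> b < n \<Longrightarrow> dmat n f $$ (a,b) = (if a = b then f a else 0)"
  unfolding dmat_def by auto

lemma mult_dmat_right:
  assumes X: "X \<in> carrier_mat n n"
  shows "X * dmat n f = mat n n (\<lambda>(a,b). X $$ (a,b) * f b)"
proof (rule eq_matI)
  fix a b assume a: "a < dim_row (mat n n (\<lambda>(a,b). X $$ (a,b) * f b))"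
    and b: "b < dim_col (mat n n (\<lambda>(a,b). X $$ (a,b) * f b))"
  have "(X * dmat n f) $$ (a,b) = (\<Sum>k<n. X $$ (a,k) * (if k = b then f k else 0))"
    using X a b by (simp add: dmat_def scalar_prod_def lessThan_atLeast0)
  also have "\<dots> = (\<Sum>k<n. if k = b then X $$ (a,k) * f k else 0)"
    by (rule sum.cong) auto
  also have "\<dots> = X $$ (a,b) * f b" using b by simp
  finally show "(X * dmat n f) $$ (a,b) = mat n n (\<lambda>(a,b). X $$ (a,b) * f b) $$ (a,b)"
    using a b by simp
qed (use X in auto)

lemma mult_dmat_left:
  assumes X: "X \<in> carrier_mat n n"
  shows "dmat n f * X = mat n n (\<lambda>(a,b). f a * X $$ (a,b))"
proof (rule eq_matI)
  fix a b assume a: "a < dim_row (mat n n (\<lambda>(a,b). f a * X $$ (a,b)))"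
    and b: "b < dim_col (mat n n (\<lambda>(a,b). f a * X $$ (a,b)))"
  have "(dmat n f * X) $$ (a,b) = (\<Sum>k<n. (if a = k then f a else 0) * X $$ (k,b))"
    using X a b by (simp add: dmat_def scalar_prod_def lessThan_atLeast0)
  also have "\<dots> = (\<Sum>k<n. if k = a then f a * X $$ (k,b) else 0)"
    by (rule sum.cong) auto
  also have "\<dots> = f a * X $$ (a,b)" using a by simp
  finally show "(dmat n f * X) $$ (a,b) = mat n n (\<lambda>(a,b). f a * X $$ (a,b)) $$ (a,b)"
    using a b by simp
qed (use X in auto)

lemma dmat_transpose[simp]: "transpose_mat (dmat n f) = dmat n f"
  by (intro eq_matI) auto

lemma dmat_inv: 
  assumes "\<And>i. i < n \<Longrightarrow> f i \<noteq> 0"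
  shows "dmat n f * dmat n (\<lambda>i. 1 / f i) = 1\<^sub>m n"
  unfolding mult_dmat_right[OF dmat_carrier] using assms by (intro eq_matI) auto

lemma dmat_commute: "dmat n f * transpose_mat (dmat n g) = dmat n g * dmat n f"
  unfolding dmat_transpose mult_dmat_right[OF dmat_carrier] by (intro eq_matI) auto

fun dseq :: "'a::field mat \<Rightarrow> nat \<Rightarrow> 'a" where
  "dseq T 0 = 1"
| "dseq T (Suc k) = dseq T k * T $$ (Suc k, k) / T $$ (k, Suc k)"

lemma dseq_nz:
  assumes "\<And>i. Suc i < n \<Longrightarrow> T $$ (i, Suc i) \<noteq> 0"
    and "\<And>i. Suc i < n \<Longrightarrow> T $$ (Suc i, i) \<noteq> 0"
  shows "k < n \<Longrightarrow> dseq T k \<noteq> 0"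
  using assms by (induction k) auto

lemma dseq_commute:
  fixes T :: "'a::field mat"
  assumes T: "T \<in> carrier_mat n n"
    and z: "\<And>i j. i < n \<Longrightarrow> j < n \<Longrightarrow> Suc i < j \<Longrightarrow> T $$ (i, j) = 0"
    and z2: "\<And>i j. i < n \<Longrightarrow> j < n \<Longrightarrow> Suc j < i \<Longrightarrow> T $$ (i, j) = 0"
    and nz1: "\<And>i. Suc i < n \<Longrightarrow> T $$ (i, Suc i) \<noteq> 0"
    and nz2: "\<And>i. Suc i < n \<Longrightarrow> T $$ (Suc i, i) \<noteq> 0"
  shows "dmat n (dseq T) * transpose_mat T = T * dmat n (dseq T)"
proof -
  have key: "dseq T a * T $$ (b, a) = T $$ (a, b) * dseq T b" if a: "a < n" and b: "b < n" for a b
  proof -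
    consider "a = b" | "Suc a < b" | "Suc b < a" | "b = Suc a" | "a = Suc b" by linarith
    then show ?thesis
    proof cases
      case 1 then show ?thesis by simp
    next
      case 2 then show ?thesis using z[OF a b] z2[OF b a] by simp
    next
      case 3 then show ?thesis using z[OF b a] z2[OF a b] by simp
    next
      case 4 then show ?thesis using nz1[of a] b by (simp add: field_simps)
    next
      case 5 then show ?thesis using nz1[of b] a by (simp add: field_simps)
    qed
  qed
  show ?thesis
    unfolding mult_dmat_left[of "transpose_mat T" n, OF transpose_carrier_mat[THEN iffD2, OF T]]
      mult_dmat_right[OF T]
    using T key by (intro eq_matI) auto
qed

lemma prod_list_ones: "(\<And>x. x \<in> set xs \<Longrightarrow> f x = (1::'a::field)) \<Longrightarrow> prod_list (map f xs) = 1"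
  by (induction xs) auto

lemma conj_fix:
  fixes S :: "'a::field mat"
  assumes S: "S \<in> carrier_mat n n" and Si: "Si \<in> carrier_mat n n"
    and SSi: "S * Si = 1\<^sub>m n" and SiS: "Si * S = 1\<^sub>m n"
    and D: "D \<in> carrier_mat n n" and Di: "Di \<in> carrier_mat n n" and DDi: "D * Di = 1\<^sub>m n"
    and Z: "Z \<in> carrier_mat n n" and DZ: "D * transpose_mat Z = Z * D"
  shows "(S * D * transpose_mat S) * transpose_mat (S * Z * Si) * (transpose_mat Si * Di * Si) = S * Z * Si"
proof -
  note sq = assoc_mult_mat[of _ n n _ n _ n] mult_carrier_mat[of _ n n _ n]
  have St: "transpose_mat S \<in> carrier_mat n n" "transpose_mat Si \<in> carrier_mat n n"
    "transpose_mat Z \<in> carrier_mat n n" using S Si Z by auto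
  have StSit: "transpose_mat S * transpose_mat Si = 1\<^sub>m n"
    using transpose_mult[OF Si S] SiS by simp
  have tr: "transpose_mat (S * Z * Si) = transpose_mat Si * (transpose_mat Z * transpose_mat S)"
    using transpose_mult[OF mult_carrier_mat[OF S Z] Si] transpose_mult[OF S Z] by simp
  have DZ': "D * (transpose_mat Z * X) = Z * (D * X)" if "X \<in> carrier_mat n n" for X
  proof -
    have "D * (transpose_mat Z * X) = (D * transpose_mat Z) * X" using D St that by simp
    also have "\<dots> = (Z * D) * X" unfolding DZ ..
    also have "\<dots> = Z * (D * X)" using D Z that by simp
    finally show ?thesis .
  qed
  have "(S * D * transpose_mat S) * transpose_mat (S * Z * Si) * (transpose_mat Si * Di * Si)
     = S * (D * (transpose_mat S * (transpose_mat Si * (transpose_mat Z * (transpose_mat S * (transpose_mat Si * (Di * Si)))))))"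
    unfolding tr using S Si D Di St by (simp add: sq)
  also have "\<dots> = S * (D * (transpose_mat Z * (Di * Si)))"
    using S Si D Di St StSit by (simp add: sq inv_cancel_assoc[of _ n _ _ n])
  also have "\<dots> = S * (Z * (D * (Di * Si)))"
    using Di Si by (simp add: DZ' sq)
  also have "\<dots> = S * (Z * Si)"
    using D Di Si DDi by (simp add: sq inv_cancel_assoc[of _ n _ _ n])
  also have "\<dots> = S * Z * Si" using S Z Si by simp
  finally show ?thesis .
qed

lemma umat_mult_vec:
  fixes X :: "'a::field mat"
  assumes X: "X \<in> carrier_mat n n" and c: "c \<in> carrier_vec n" and i: "i < n"
  shows "(X * umat n i i) *\<^sub>v c = c $ i \<cdot>\<^sub>v col X i"
proof (rule eq_vecI)
  fix a assume a: "a < dim_vec (c $ i \<cdot>\<^sub>v col X i)"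
  then have a': "a < n" using X by simp
  have "((X * umat n i i) *\<^sub>v c) $ a = (\<Sum>k<n. (if k = i then X $$ (a,i) else 0) * c $ k)"
    using X c a' i by (simp add: mult_umat_right scalar_prod_def lessThan_atLeast0)
  also have "\<dots> = (\<Sum>k<n. if k = i then X $$ (a,i) * c $ k else 0)"
    by (rule sum.cong) auto
  also have "\<dots> = X $$ (a,i) * c $ i" using i by simp
  finally show "((X * umat n i i) *\<^sub>v c) $ a = (c $ i \<cdot>\<^sub>v col X i) $ a"
    using X a' i by simp
qed (use X in simp)

lemma main:
  fixes d n :: nat and A As :: "'a :: field mat" and ths :: "nat \<Rightarrow> 'a"
  assumes n: "n = Suc d"
    and mfA: "mult_free d A" and mfAs: "mult_free d As"
    and eo: "eig_ordering d As ths"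
    and z: "\<And>i j. i \<le> d \<Longrightarrow> j \<le> d \<Longrightarrow> \<bar>int i - int j\<bar> > 1 \<Longrightarrow>
           prim_idem d As ths i * A * prim_idem d As ths j = 0\<^sub>m (Suc d) (Suc d)"
    and nz: "\<And>i j. i \<le> d \<Longrightarrow> j \<le> d \<Longrightarrow> \<bar>int i - int j\<bar> = 1 \<Longrightarrow>
           prim_idem d As ths i * A * prim_idem d As ths j \<noteq> 0\<^sub>m (Suc d) (Suc d)"
  shows "\<exists>\<sigma>. antiautomorphism n \<sigma> \<and> \<sigma> A = A \<and> \<sigma> As = As \<and>
           (\<forall>\<tau>. antiautomorphism n \<tau> \<and> \<tau> A = A \<and> \<tau> As = As \<longrightarrow>
                 (\<forall>X\<in>carrier_mat n n. \<tau> X = \<sigma> X)) \<and>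
           (\<forall>X\<in>carrier_mat n n. \<sigma> (\<sigma> X) = X)"
proof -
  note sq = assoc_mult_mat[of _ n n _ n _ n] mult_carrier_mat[of _ n n _ n]
  have A: "A \<in> carrier_mat n n" and As: "As \<in> carrier_mat n n"
    using mfA mfAs n unfolding mult_free_def by simp_all
  have inj: "inj_on ths {0..d}" and img: "ths ` {0..d} = {k. eigenvalue As k}"
    using eo unfolding eig_ordering_def by simp_all
  have "\<forall>i\<in>{0..d}. \<exists>w. eigenvector As w (ths i)"
  proof
    fix i assume i: "i \<in> {0..d}"
    have "ths i \<in> ths ` {0..d}" using i by (rule imageI)
    then have "eigenvalue As (ths i)" unfolding img by simp
    then show "\<exists>w. eigenvector As w (ths i)" unfolding eigenvalue_def .
  qed
  from bchoice[OF this] obtain v where v: "\<forall>i\<in>{0..d}. eigenvector As (v i) (ths i)" by (elim exE)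
  have vc: "v i \<in> carrier_vec n" and vnz: "v i \<noteq> 0\<^sub>v n" and vev: "As *\<^sub>v v i = ths i \<cdot>\<^sub>v v i"
    if "i < n" for i
  proof -
    have "i \<in> {0..d}" using that n by simp
    then have "eigenvector As (v i) (ths i)" using v by simp
    then show "v i \<in> carrier_vec n" "v i \<noteq> 0\<^sub>v n" "As *\<^sub>v v i = ths i \<cdot>\<^sub>v v i"
      unfolding eigenvector_def using As by simp_all
  qed
  define E where "E i = prim_idem d As ths i" for i
  have E_fold: "E i = foldr (\<lambda>j M. ((\<lambda>k. 1 / (ths i - ths k)) j \<cdot>\<^sub>m (As - ths j \<cdot>\<^sub>m 1\<^sub>m n)) * M)
      (filter (\<lambda>j. j \<noteq> i) [0..<n]) (1\<^sub>m n)" for i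
    unfolding E_def prim_idem_def n by simp
  have Ec: "E i \<in> carrier_mat n n" for i
    unfolding E_fold by (rule foldr_carrier[OF As])
  have Ev: "E i *\<^sub>v v j = (if i = j then v j else 0\<^sub>v n)" if i: "i < n" and j: "j < n" for i j
  proof -
    have "E i *\<^sub>v v j = prod_list (map (\<lambda>k. 1 / (ths i - ths k) * (ths j - ths k)) (filter (\<lambda>k. k \<noteq> i) [0..<n])) \<cdot>\<^sub>v v j"
      unfolding E_fold by (rule foldr_vec[OF As vc[OF j] vev[OF j]])
    also have "\<dots> = (if i = j then v j else 0\<^sub>v n)"
    proof (cases "i = j")
      case True
      have "prod_list (map (\<lambda>k. 1 / (ths i - ths k) * (ths j - ths k)) (filter (\<lambda>k. k \<noteq> i) [0..<n])) = 1"
      proof (rule prod_list_ones)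
        fix k assume "k \<in> set (filter (\<lambda>k. k \<noteq> i) [0..<n])"
        then have k: "k \<noteq> i" "k < n" by auto
        have "ths i \<noteq> ths k"
        proof
          assume "ths i = ths k"
          with inj have "i = k" using i k n unfolding inj_on_def by simp
          with k show False by simp
        qed
        then show "1 / (ths i - ths k) * (ths j - ths k) = 1" using True by simp
      qed
      then show ?thesis using True vc[OF j] by simp
    next
      case False
      have jin: "j \<in> set (filter (\<lambda>k. k \<noteq> i) [0..<n])" using False j by simp
      have "0 \<in> set (map (\<lambda>k. 1 / (ths i - ths k) * (ths j - ths k)) (filter (\<lambda>k. k \<noteq> i) [0..<n]))"
        unfolding set_map by (rule image_eqI[of _ _ j, OF _ jin]) simp
      then have "prod_list (map (\<lambda>k. 1 / (ths i - ths k) * (ths j - ths k)) (filter (\<lambda>k. k \<noteq> i) [0..<n])) = 0"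
        by (simp add: prod_list_zero_iff)
      then show ?thesis using False vc[OF j] by (intro eq_vecI) auto
    qed
    finally show ?thesis .
  qed
  define S where "S = mat n n (\<lambda>(a,b). v b $ a)"
  have Sc: "S \<in> carrier_mat n n" unfolding S_def by simp
  have colS: "col S b = v b" if "b < n" for b
    using that vc[OF that] unfolding S_def by (intro eq_vecI) auto
  have ES: "E i * S = S * umat n i i" if i: "i < n" for i
  proof (rule eq_matI)
    fix a b assume a: "a < dim_row (S * umat n i i)" and b: "b < dim_col (S * umat n i i)"
    then have a': "a < n" and b': "b < n" using Sc by auto
    have "(E i * S) $$ (a,b) = row (E i) a \<bullet> col S b" using Ec[of i] Sc a' b' by simp
    also have "\<dots> = (E i *\<^sub>v v b) $ a" using Ec[of i] a' b' colS[OF b'] by simp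
    also have "\<dots> = (if i = b then v b $ a else 0)" unfolding Ev[OF i b'] using a' by simp
    also have "\<dots> = (S * umat n i i) $$ (a,b)"
      unfolding mult_umat_right[OF Sc i i] using a' b' by (simp add: S_def)
    finally show "(E i * S) $$ (a,b) = (S * umat n i i) $$ (a,b)" .
  qed (use Ec Sc in auto)
  have detS: "det S \<noteq> 0"
  proof
    assume "det S = 0"
    then obtain c where c: "c \<in> carrier_vec n" "c \<noteq> 0\<^sub>v n" "S *\<^sub>v c = 0\<^sub>v n"
      using det_0_iff_vec_prod_zero_field[OF Sc] by auto
    have ci: "c $ i = 0" if i: "i < n" for i
    proof -
      have "(E i * S) *\<^sub>v c = E i *\<^sub>v (S *\<^sub>v c)" by (rule assoc_mult_mat_vec[OF Ec Sc c(1)])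
      also have "\<dots> = 0\<^sub>v n" unfolding c(3) using Ec[of i] by (intro eq_vecI) auto
      finally have "(S * umat n i i) *\<^sub>v c = 0\<^sub>v n" unfolding ES[OF i] .
      then have eq: "c $ i \<cdot>\<^sub>v v i = 0\<^sub>v n" unfolding umat_mult_vec[OF Sc c(1) i] colS[OF i] .
      have "\<exists>a<n. v i $ a \<noteq> 0"
      proof (rule ccontr)
        assume "\<not> (\<exists>a<n. v i $ a \<noteq> 0)"
        then have "v i = 0\<^sub>v n" using vc[OF i] by (intro eq_vecI) auto
        with vnz[OF i] show False by simp
      qed
      then obtain a where a: "a < n" "v i $ a \<noteq> 0" by blast
      have "(c $ i \<cdot>\<^sub>v v i) $ a = 0" unfolding eq using a by simp
      then have "c $ i * v i $ a = 0" using a vc[OF i] by simp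
      then show ?thesis using a by simp
    qed
    have "c = 0\<^sub>v n" using c(1) ci by (intro eq_vecI) auto
    with c(2) show False by simp
  qed
  have "S \<in> Units (ring_mat TYPE('a) n ())" by (rule det_non_zero_imp_unit[OF Sc detS])
  then have "\<exists>Si\<in>carrier_mat n n. Si * S = 1\<^sub>m n \<and> S * Si = 1\<^sub>m n"
    unfolding Units_def ring_mat_def by simp
  then obtain Si where Si: "Si \<in> carrier_mat n n" and SiS: "Si * S = 1\<^sub>m n" and SSi: "S * Si = 1\<^sub>m n"
    by blast
  have E_conj: "E i = S * umat n i i * Si" if i: "i < n" for i
  proof -
    have "E i = E i * (S * Si)" unfolding SSi using Ec[of i] by simp
    also have "\<dots> = (E i * S) * Si" using Ec[of i] Sc Si by simp
    finally show ?thesis unfolding ES[OF i] .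
  qed
  define T where "T = Si * A * S"
  have Tc: "T \<in> carrier_mat n n" unfolding T_def using Si A Sc by simp
  have A_conj: "A = S * T * Si"
  proof -
    have "S * T * Si = S * (Si * (A * (S * Si)))" unfolding T_def using Sc Si A by (simp add: sq)
    also have "\<dots> = A" using Sc Si A SSi by (simp add: inv_cancel_assoc[of _ n _ _ n])
    finally show ?thesis by simp
  qed
  have EAE: "E i * A * E j = S * (T $$ (i,j) \<cdot>\<^sub>m umat n i j) * Si" if i: "i < n" and j: "j < n" for i j
  proof -
    have "E i * A * E j = S * (umat n i i * T * umat n j j) * Si"
      unfolding E_conj[OF i] E_conj[OF j] T_def using Sc Si A by (simp add: sq)
    then show ?thesis unfolding umat_mid[OF Tc i j] .
  qed
  have T_entry: "T $$ (i,j) = 0 \<longleftrightarrow> E i * A * E j = 0\<^sub>m n n" if i: "i < n" and j: "j < n" for i j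
  proof
    assume "T $$ (i,j) = 0"
    then have "T $$ (i,j) \<cdot>\<^sub>m umat n i j = 0\<^sub>m n n" by (intro eq_matI) auto
    then show "E i * A * E j = 0\<^sub>m n n" unfolding EAE[OF i j] using Sc Si by simp
  next
    assume "E i * A * E j = 0\<^sub>m n n"
    then have "Si * (S * (T $$ (i,j) \<cdot>\<^sub>m umat n i j) * Si) * S = Si * 0\<^sub>m n n * S"
      unfolding EAE[OF i j] by simp
    then have "T $$ (i,j) \<cdot>\<^sub>m umat n i j = 0\<^sub>m n n"
      using conj_cancel[OF Sc Si _ SiS SSi, of "T $$ (i,j) \<cdot>\<^sub>m umat n i j"] Sc Si by simp
    then have "(T $$ (i,j) \<cdot>\<^sub>m umat n i j) $$ (i,j) = 0" using i j by simp
    then show "T $$ (i,j) = 0" using i j by simp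
  qed
  have Ez: "E i * A * E j = 0\<^sub>m n n" if "i < n" "j < n" "\<bar>int i - int j\<bar> > 1" for i j
    using z[of i j] that n unfolding E_def by simp
  have Enz: "E i * A * E j \<noteq> 0\<^sub>m n n" if "i < n" "j < n" "\<bar>int i - int j\<bar> = 1" for i j
    using nz[of i j] that n unfolding E_def by simp
  have Tz1: "T $$ (i,j) = 0" if "i < n" "j < n" "Suc i < j" for i j
    using T_entry[of i j] Ez[of i j] that by simp
  have Tz2: "T $$ (i,j) = 0" if "i < n" "j < n" "Suc j < i" for i j
    using T_entry[of i j] Ez[of i j] that by simp
  have Tnz1: "T $$ (i,Suc i) \<noteq> 0" if "Suc i < n" for i
    using T_entry[of i "Suc i"] Enz[of i "Suc i"] that by simp
  have Tnz2: "T $$ (Suc i,i) \<noteq> 0" if "Suc i < n" for i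
    using T_entry[of "Suc i" i] Enz[of "Suc i" i] that by simp
  have gen: "P X"
    if Padd: "\<And>X Y. X \<in> carrier_mat n n \<Longrightarrow> Y \<in> carrier_mat n n \<Longrightarrow> P X \<Longrightarrow> P Y \<Longrightarrow> P (X + Y)"
    and Pmul: "\<And>X Y. X \<in> carrier_mat n n \<Longrightarrow> Y \<in> carrier_mat n n \<Longrightarrow> P X \<Longrightarrow> P Y \<Longrightarrow> P (X * Y)"
    and Psm: "\<And>c X. X \<in> carrier_mat n n \<Longrightarrow> P X \<Longrightarrow> P (c \<cdot>\<^sub>m X)"
    and P1: "P (1\<^sub>m n)" and PA: "P A" and PAs: "P As" and X: "X \<in> carrier_mat n n"
    for P X
  proof -
    define Q where "Q Y = P (S * Y * Si)" for Y
    have cc: "S * Y * Si \<in> carrier_mat n n" if "Y \<in> carrier_mat n n" for Y using Sc Si that by simp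
    have "Q (Si * X * S)"
    proof (rule gen_conj[of n Q T])
      fix X Y :: "'a mat" assume X: "X \<in> carrier_mat n n" and Y: "Y \<in> carrier_mat n n" and QX: "Q X" and QY: "Q Y"
      have "S * (X + Y) * Si = S * X * Si + S * Y * Si"
      proof -
        have "S * (X + Y) * Si = (S * X + S * Y) * Si" using Sc X Y by (simp add: mult_add_distrib_mat[of S n n])
        also have "\<dots> = S * X * Si + S * Y * Si" using Sc Si X Y by (intro add_mult_distrib_mat[of _ n n]) auto
        finally show ?thesis .
      qed
      then show "Q (X + Y)" using QX QY Padd[OF cc[OF X] cc[OF Y]] unfolding Q_def by simp
      have "S * (X * Y) * Si = (S * X * Si) * (S * Y * Si)"
      proof -
        have "(S * X * Si) * (S * Y * Si) = S * (X * (Si * (S * (Y * Si))))" using Sc Si X Y by (simp add: sq)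
        also have "\<dots> = S * (X * (Y * Si))" using Sc Si Y SiS by (simp add: inv_cancel_assoc[of _ n _ _ n] sq)
        also have "\<dots> = S * (X * Y) * Si" using Sc Si X Y by (simp add: sq)
        finally show ?thesis by simp
      qed
      then show "Q (X * Y)" using QX QY Pmul[OF cc[OF X] cc[OF Y]] unfolding Q_def by simp
    next
      fix c and X :: "'a mat" assume X: "X \<in> carrier_mat n n" and QX: "Q X"
      have "S * (c \<cdot>\<^sub>m X) * Si = c \<cdot>\<^sub>m (S * X * Si)"
        using Sc Si X by (simp add: mult_smult_distrib[of S n n] mult_smult_assoc_mat[of _ n n Si n])
      then show "Q (c \<cdot>\<^sub>m X)" using QX Psm[OF cc[OF X]] unfolding Q_def by simp
    next
      fix i assume i: "i < n"
      have "P (E i)" unfolding E_fold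
        by (rule foldr_P[OF As Padd Pmul Psm P1 PAs])
      then show "Q (umat n i i)" unfolding Q_def E_conj[OF i] .
    next
      show "T \<in> carrier_mat n n" by (rule Tc)
      show "Q T" unfolding Q_def A_conj[symmetric] by (rule PA)
      show "Si * X * S \<in> carrier_mat n n" using Si X Sc by simp
    qed (use Tnz1 Tnz2 in auto)
    then show "P X" unfolding Q_def using conj_cancel[OF Si Sc X SSi SiS] by simp
  qed
  define \<delta> where "\<delta> = dseq T"
  have \<delta>nz: "\<delta> i \<noteq> 0" if "i < n" for i unfolding \<delta>_def by (rule dseq_nz[OF Tnz1 Tnz2 that])
  define D where "D = dmat n \<delta>"
  define Di where "Di = dmat n (\<lambda>i. 1 / \<delta> i)"
  have Dc: "D \<in> carrier_mat n n" and Dic: "Di \<in> carrier_mat n n" unfolding D_def Di_def by simp_all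
  have DDi: "D * Di = 1\<^sub>m n" unfolding D_def Di_def by (rule dmat_inv[OF \<delta>nz])
  have DiD: "Di * D = 1\<^sub>m n"
  proof -
    have "Di * dmat n (\<lambda>i. 1 / (1 / \<delta> i)) = 1\<^sub>m n" unfolding Di_def by (rule dmat_inv) (use \<delta>nz in simp)
    then show ?thesis unfolding D_def by simp
  qed
  define M where "M = S * D * transpose_mat S"
  define Mi where "Mi = transpose_mat Si * Di * Si"
  have Mc: "M \<in> carrier_mat n n" and Mic: "Mi \<in> carrier_mat n n" unfolding M_def Mi_def using Sc Si Dc Dic by simp_all
  have St: "transpose_mat S \<in> carrier_mat n n" "transpose_mat Si \<in> carrier_mat n n" using Sc Si by simp_all
  have StSit: "transpose_mat S * transpose_mat Si = 1\<^sub>m n" using transpose_mult[OF Si Sc] SiS by simp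
  have SitSt: "transpose_mat Si * transpose_mat S = 1\<^sub>m n" using transpose_mult[OF Sc Si] SSi by simp
  have MMi: "M * Mi = 1\<^sub>m n"
  proof -
    have "M * Mi = S * (D * (transpose_mat S * (transpose_mat Si * (Di * Si))))"
      unfolding M_def Mi_def using Sc Si Dc Dic St by (simp add: sq)
    also have "\<dots> = 1\<^sub>m n" using Sc Si Dc Dic St StSit DDi SSi by (simp add: sq inv_cancel_assoc[of _ n _ _ n])
    finally show ?thesis .
  qed
  have MiM: "Mi * M = 1\<^sub>m n"
  proof -
    have "Mi * M = transpose_mat Si * (Di * (Si * (S * (D * transpose_mat S))))"
      unfolding M_def Mi_def using Sc Si Dc Dic St by (simp add: sq)
    also have "\<dots> = 1\<^sub>m n" using Sc Si Dc Dic St SitSt DiD SiS by (simp add: sq inv_cancel_assoc[of _ n _ _ n])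
    finally show ?thesis .
  qed
  define \<sigma> where "\<sigma> X = M * transpose_mat X * Mi" for X
  have anti: "antiautomorphism n \<sigma>" unfolding \<sigma>_def by (rule anti_conj[OF Mc Mic MMi MiM])
  have DT: "D * transpose_mat T = T * D" unfolding D_def \<delta>_def
    by (rule dseq_commute[OF Tc Tz1 Tz2 Tnz1 Tnz2])
  have sA: "\<sigma> A = A"
  proof -
    have "\<sigma> (S * T * Si) = S * T * Si" unfolding \<sigma>_def M_def Mi_def
      by (rule conj_fix[OF Sc Si SSi SiS Dc Dic DDi Tc DT])
    then show ?thesis unfolding A_conj[symmetric] .
  qed
  define L where "L = dmat n ths"
  have As_conj: "As = S * L * Si"
  proof -
    have AsS: "As * S = S * L"
    proof (rule eq_matI)
      fix a b assume a: "a < dim_row (S * L)" and b: "b < dim_col (S * L)"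
      then have a': "a < n" and b': "b < n" using Sc by (auto simp: L_def)
      have "(As * S) $$ (a,b) = (As *\<^sub>v v b) $ a" using As Sc a' b' colS[OF b'] by simp
      also have "\<dots> = ths b * v b $ a" unfolding vev[OF b'] using a' vc[OF b'] by simp
      also have "\<dots> = (S * L) $$ (a,b)" unfolding L_def mult_dmat_right[OF Sc] using a' b' by (simp add: S_def)
      finally show "(As * S) $$ (a,b) = (S * L) $$ (a,b)" .
    qed (use As Sc in \<open>auto simp: L_def\<close>)
    have "As = As * (S * Si)" unfolding SSi using As by simp
    also have "\<dots> = (As * S) * Si" using As Sc Si by simp
    finally show ?thesis unfolding AsS .
  qed
  have DL: "D * transpose_mat L = L * D" unfolding D_def L_def by (rule dmat_commute)
  have sAs: "\<sigma> As = As"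
  proof -
    have "\<sigma> (S * L * Si) = S * L * Si" unfolding \<sigma>_def M_def Mi_def
      by (rule conj_fix[OF Sc Si SSi SiS Dc Dic DDi _ DL]) (simp add: L_def)
    then show ?thesis unfolding As_conj[symmetric] .
  qed
  have anti_add: "\<tau> (X + Y) = \<tau> X + \<tau> Y" and anti_mul: "\<tau> (X * Y) = \<tau> Y * \<tau> X"
    and anti_sm: "\<tau> (c \<cdot>\<^sub>m X) = c \<cdot>\<^sub>m \<tau> X"
    if "antiautomorphism n \<tau>" "X \<in> carrier_mat n n" "Y \<in> carrier_mat n n" for \<tau> X Y c
    using that unfolding antiautomorphism_def by simp_all
  have uniq: "\<forall>X\<in>carrier_mat n n. \<tau> X = \<sigma> X" if t: "antiautomorphism n \<tau>" "\<tau> A = A" "\<tau> As = As" for \<tau>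
  proof
    fix X :: "'a mat" assume X: "X \<in> carrier_mat n n"
    show "\<tau> X = \<sigma> X"
    proof (rule gen[where P = "\<lambda>X. \<tau> X = \<sigma> X", OF _ _ _ _ _ _ X])
      fix X Y :: "'a mat" assume X: "X \<in> carrier_mat n n" and Y: "Y \<in> carrier_mat n n"
        and e: "\<tau> X = \<sigma> X" "\<tau> Y = \<sigma> Y"
      show "\<tau> (X + Y) = \<sigma> (X + Y)"
        using anti_add[OF t(1) X Y] anti_add[OF anti X Y] e by simp
      show "\<tau> (X * Y) = \<sigma> (X * Y)"
        using anti_mul[OF t(1) X Y] anti_mul[OF anti X Y] e by simp
    next
      fix c and X :: "'a mat" assume X: "X \<in> carrier_mat n n" and e: "\<tau> X = \<sigma> X"
      show "\<tau> (c \<cdot>\<^sub>m X) = \<sigma> (c \<cdot>\<^sub>m X)"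
        using anti_sm[OF t(1) X X] anti_sm[OF anti X X] e by simp
    next
      show "\<tau> (1\<^sub>m n) = \<sigma> (1\<^sub>m n)" using anti_one[OF t(1)] anti_one[OF anti] by simp
      show "\<tau> A = \<sigma> A" using t(2) sA by simp
      show "\<tau> As = \<sigma> As" using t(3) sAs by simp
    qed
  qed
  have invol: "\<forall>X\<in>carrier_mat n n. \<sigma> (\<sigma> X) = X"
  proof
    fix X :: "'a mat" assume X: "X \<in> carrier_mat n n"
    show "\<sigma> (\<sigma> X) = X"
    proof (rule gen[where P = "\<lambda>X. \<sigma> (\<sigma> X) = X", OF _ _ _ _ _ _ X])
      fix X Y :: "'a mat" assume X: "X \<in> carrier_mat n n" and Y: "Y \<in> carrier_mat n n"
        and e: "\<sigma> (\<sigma> X) = X" "\<sigma> (\<sigma> Y) = Y"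
      have sX: "\<sigma> X \<in> carrier_mat n n" and sY: "\<sigma> Y \<in> carrier_mat n n"
        using anti_carrier[OF anti X] anti_carrier[OF anti Y] by simp_all
      show "\<sigma> (\<sigma> (X + Y)) = X + Y"
        using anti_add[OF anti X Y] anti_add[OF anti sX sY] e by simp
      show "\<sigma> (\<sigma> (X * Y)) = X * Y"
        using anti_mul[OF anti X Y] anti_mul[OF anti sY sX] e by simp
    next
      fix c and X :: "'a mat" assume X: "X \<in> carrier_mat n n" and e: "\<sigma> (\<sigma> X) = X"
      have sX: "\<sigma> X \<in> carrier_mat n n" using anti_carrier[OF anti X] by simp
      show "\<sigma> (\<sigma> (c \<cdot>\<^sub>m X)) = c \<cdot>\<^sub>m X"
        using anti_sm[OF anti X X] anti_sm[OF anti sX sX] e by simp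
    next
      show "\<sigma> (\<sigma> (1\<^sub>m n)) = 1\<^sub>m n" using anti_one[OF anti] by simp
      show "\<sigma> (\<sigma> A) = A" using sA by simp
      show "\<sigma> (\<sigma> As) = As" using sAs by simp
    qed
  qed
  show ?thesis using anti sA sAs uniq invol by blast
qed

theorem lemma5p4:
  fixes d :: nat and A As :: "'a :: field mat" and ths :: "nat \<Rightarrow> 'a"
  assumes "mult_free d A" and "mult_free d As"
    and "eig_ordering d As ths"
    and "\<And>i j. i \<le> d \<Longrightarrow> j \<le> d \<Longrightarrow> \<bar>int i - int j\<bar> > 1 \<Longrightarrow>
           prim_idem d As ths i * A * prim_idem d As ths j = 0\<^sub>m (Suc d) (Suc d)"
    and "\<And>i j. i \<le> d \<Longrightarrow> j \<le> d \<Longrightarrow> \<bar>int i - int j\<bar> = 1 \<Longrightarrow>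
           prim_idem d As ths i * A * prim_idem d As ths j \<noteq> 0\<^sub>m (Suc d) (Suc d)"
  shows "\<exists>\<sigma>. antiautomorphism (Suc d) \<sigma> \<and> \<sigma> A = A \<and> \<sigma> As = As \<and>
           (\<forall>\<tau>. antiautomorphism (Suc d) \<tau> \<and> \<tau> A = A \<and> \<tau> As = As \<longrightarrow>
                 (\<forall>X\<in>carrier_mat (Suc d) (Suc d). \<tau> X = \<sigma> X)) \<and>
           (\<forall>X\<in>carrier_mat (Suc d) (Suc d). \<sigma> (\<sigma> X) = X)"
  by (rule main[OF refl assms])

end
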